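(* Let $p$ be a pattern graph, $d$ a data graph and $V_c(p)$ a vertex cover of $p$, and assume $M(p,d)\neq\emptyset$. Let $R=S_{plain}/S_{comp}$ be the compression ratio, where $S_{plain}=|V(p)|\cdot|M(p,d)|$ and $S_{comp}=\sum_{s}\mathrm{size}(f|s)$, the sum ranging over all skeletons $s:V_c(p)\to V(d)$ with $M|s\neq\emptyset$. Then $$R\ \ge\ \frac{|V(p)|\cdot |M(p,d)|}{|V(p)|\cdot |M(p,d)| + |V_c(p)|\cdot \big(|M(p[V_c(p)],d)| - |M(p,d)|\big)}.$$
   Context: Graphs are finite, simple and undirected. $p$ (the pattern) and $d$ (the data graph) are graphs, the vertices of $d$ carry a fixed total order, and $\mathbf{ord}$ is a set of ordered pairs of vertices of $p$ (a symmetry-breaking partial order). For a subgraph $p'$ of $p$, a match of $p'$ in $d$ is an injective map $f:V(p')\to V(d)$ such that $(f(x),f(y))\in E(d)$ for every edge $(x,y)\in E(p')$ and $f(x)<f(y)$ for every $(x,y)\in\mathbf{ord}$ with $x,y\in V(p')$; $M(p',d)$ denotes the set of matches of $p'$ in $d$. A vertex cover of $p$ is a set $V_c(p)\subseteq V(p)$ containing at least one endpoint of every edge of $p$, and $p[V_c(p)]$ is the subgraph of $p$ induced on $V_c(p)$. For a skeleton $s:V_c(p)\to V(d)$, $M|s=\{f\in M(p,d): f|_{V_c(p)}=s\}$. Storage model: each vertex occupies one integer. The compressed form $f|s$ of $M|s$ stores $s$ ($|V_c(p)|$ integers) and, for each $v\in V(p)\setminus V_c(p)$, the set $f|s(v)=\{f(v):f\in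 M|s\}$ ($|f|s(v)|$ integers), so $\mathrm{size}(f|s)=|V_c(p)|+\sum_{v\in V(p)\setminus V_c(p)}|f|s(v)|$. *)

theory Defs
  imports Complex_Main "HOL-Library.FuncSet"
begin

definition simple_graph :: "'v set \<Rightarrow> ('v \<times> 'v) set \<Rightarrow> bool" where
  "simple_graph V E \<longleftrightarrow> finite V \<and> E \<subseteq> V \<times> V \<and> sym E \<and> irrefl E"

definition induced_edges :: "('a \<times> 'a) set \<Rightarrow> 'a set \<Rightarrow> ('a \<times> 'a) set" where
  "induced_edges E S = {(x, y). (x, y) \<in> E \<and> x \<in> S \<and> y \<in> S}"

text \<open>Matches M(p',d) of the subgraph p' = (S, E') of p in d = (Vd, Ed), respecting
the symmetry-breaking order ord.  Maps are represented as functions that are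
extensional (undefined) outside S.\<close>
definition matches ::
  "'a set \<Rightarrow> ('a \<times> 'a) set \<Rightarrow> ('a \<times> 'a) set \<Rightarrow> 'b::linorder set \<Rightarrow> ('b \<times> 'b) set \<Rightarrow> ('a \<Rightarrow> 'b) set" where
  "matches S E' ord Vd Ed =
     {f. f \<in> S \<rightarrow>\<^sub>E Vd \<and> inj_on f S
         \<and> (\<forall>(x, y) \<in> E'. (f x, f y) \<in> Ed)
         \<and> (\<forall>(x, y) \<in> ord. x \<in> S \<longrightarrow> y \<in> S \<longrightarrow> f x < f y)}"

definition vertex_cover :: "'a set \<Rightarrow> ('a \<times> 'a) set \<Rightarrow> 'a set \<Rightarrow> bool" where
  "vertex_cover Vp Ep Vc \<longleftrightarrow> Vc \<subseteq> Vp \<and> (\<forall>(x, y) \<in> Ep. x \<in> Vc \<or> y \<in> Vc)"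

definition matches_given ::
  "'a set \<Rightarrow> ('a \<times> 'a) set \<Rightarrow> ('a \<times> 'a) set \<Rightarrow> 'b::linorder set \<Rightarrow> ('b \<times> 'b) set
   \<Rightarrow> 'a set \<Rightarrow> ('a \<Rightarrow> 'b) \<Rightarrow> ('a \<Rightarrow> 'b) set" where
  "matches_given Vp Ep ord Vd Ed Vc s = {f \<in> matches Vp Ep ord Vd Ed. restrict f Vc = s}"

definition comp_size ::
  "'a set \<Rightarrow> ('a \<times> 'a) set \<Rightarrow> ('a \<times> 'a) set \<Rightarrow> 'b::linorder set \<Rightarrow> ('b \<times> 'b) set
   \<Rightarrow> 'a set \<Rightarrow> ('a \<Rightarrow> 'b) \<Rightarrow> nat" where
  "comp_size Vp Ep ord Vd Ed Vc s =
     card Vc + (\<Sum>v \<in> Vp - Vc. card ((\<lambda>f. f v) ` matches_given Vp Ep ord Vd Ed Vc s))"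

definition skeletons ::
  "'a set \<Rightarrow> ('a \<times> 'a) set \<Rightarrow> ('a \<times> 'a) set \<Rightarrow> 'b::linorder set \<Rightarrow> ('b \<times> 'b) set
   \<Rightarrow> 'a set \<Rightarrow> ('a \<Rightarrow> 'b) set" where
  "skeletons Vp Ep ord Vd Ed Vc =
     {s. s \<in> Vc \<rightarrow>\<^sub>E Vd \<and> matches_given Vp Ep ord Vd Ed Vc s \<noteq> {}}"

definition S_plain ::
  "'a set \<Rightarrow> ('a \<times> 'a) set \<Rightarrow> ('a \<times> 'a) set \<Rightarrow> 'b::linorder set \<Rightarrow> ('b \<times> 'b) set \<Rightarrow> nat" where
  "S_plain Vp Ep ord Vd Ed = card Vp * card (matches Vp Ep ord Vd Ed)"

definition S_comp ::
  "'a set \<Rightarrow> ('a \<times> 'a) set \<Rightarrow> ('a \<times> 'a) set \<Rightarrow> 'b::linorder set \<Rightarrow> ('b \<times> 'b) set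
   \<Rightarrow> 'a set \<Rightarrow> nat" where
  "S_comp Vp Ep ord Vd Ed Vc =
     (\<Sum>s \<in> skeletons Vp Ep ord Vd Ed Vc. comp_size Vp Ep ord Vd Ed Vc s)"

definition compression_ratio ::
  "'a set \<Rightarrow> ('a \<times> 'a) set \<Rightarrow> ('a \<times> 'a) set \<Rightarrow> 'b::linorder set \<Rightarrow> ('b \<times> 'b) set
   \<Rightarrow> 'a set \<Rightarrow> real" where
  "compression_ratio Vp Ep ord Vd Ed Vc =
     real (S_plain Vp Ep ord Vd Ed) / real (S_comp Vp Ep ord Vd Ed Vc)"

end

theory Submission
  imports Defs
begin

theorem mainTheorem2:
  fixes Vp :: "'a set" and Ep ord :: "('a \<times> 'a) set"
    and Vd :: "'b::linorder set" and Ed :: "('b \<times> 'b) set" and Vc :: "'a set"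
  assumes "simple_graph Vp Ep" and "simple_graph Vd Ed"
    and "ord \<subseteq> Vp \<times> Vp"
    and "vertex_cover Vp Ep Vc"
    and "matches Vp Ep ord Vd Ed \<noteq> {}"
  shows "compression_ratio Vp Ep ord Vd Ed Vc \<ge>
    real (card Vp * card (matches Vp Ep ord Vd Ed)) /
      (real (card Vp * card (matches Vp Ep ord Vd Ed))
       + real (card Vc) * (real (card (matches Vc (induced_edges Ep Vc) ord Vd Ed))
                           - real (card (matches Vp Ep ord Vd Ed))))"
proof -
  define M where "M = matches Vp Ep ord Vd Ed"
  define Mc where "Mc = matches Vc (induced_edges Ep Vc) ord Vd Ed"
  define MG where "MG = matches_given Vp Ep ord Vd Ed Vc"
  define K where "K = skeletons Vp Ep ord Vd Ed Vc"
  have fVp: "finite Vp" and fVd: "finite Vd" using assms(1,2) by (auto simp: simple_graph_def)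
  have VcVp: "Vc \<subseteq> Vp" using assms(4) by (auto simp: vertex_cover_def)
  have fVc: "finite Vc" using fVp VcVp finite_subset by blast
  have fM: "finite M"
    by (rule finite_subset[of _ "Vp \<rightarrow>\<^sub>E Vd"]) (auto simp: M_def matches_def finite_PiE fVp fVd)
  have fMc: "finite Mc"
    by (rule finite_subset[of _ "Vc \<rightarrow>\<^sub>E Vd"]) (auto simp: Mc_def matches_def finite_PiE fVc fVd)
  have MGdef: "MG s = {f \<in> M. restrict f Vc = s}" for s
    by (simp add: MG_def M_def matches_given_def)
  have K_eq: "K = (\<lambda>f. restrict f Vc) ` M"
  proof
    show "K \<subseteq> (\<lambda>f. restrict f Vc) ` M"
      by (auto simp: K_def skeletons_def matches_given_def M_def)
  next
    show "(\<lambda>f. restrict f Vc) ` M \<subseteq> K"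
    proof
      fix s assume "s \<in> (\<lambda>f. restrict f Vc) ` M"
      then obtain f where f: "f \<in> M" "s = restrict f Vc" by blast
      have "s \<in> Vc \<rightarrow>\<^sub>E Vd" using f VcVp by (auto simp: M_def matches_def)
      moreover have "f \<in> MG s" using f by (simp add: MGdef)
      ultimately show "s \<in> K" by (auto simp: K_def skeletons_def MG_def)
    qed
  qed
  have KMc: "K \<subseteq> Mc"
  proof
    fix s assume "s \<in> K"
    then obtain f where f: "f \<in> M" "s = restrict f Vc" using K_eq by blast
    have fm: "f \<in> Vp \<rightarrow>\<^sub>E Vd" "inj_on f Vp" "\<forall>(x, y) \<in> Ep. (f x, f y) \<in> Ed"
      "\<forall>(x, y) \<in> ord. x \<in> Vp \<longrightarrow> y \<in> Vp \<longrightarrow> f x < f y"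
      using f(1) by (auto simp: M_def matches_def)
    have "inj_on s Vc" using fm(2) VcVp f(2) by (auto simp: inj_on_def)
    moreover have "s \<in> Vc \<rightarrow>\<^sub>E Vd" using fm(1) VcVp f(2) by auto
    moreover have "\<forall>(x, y) \<in> induced_edges Ep Vc. (s x, s y) \<in> Ed"
      using fm(3) f(2) by (auto simp: induced_edges_def)
    moreover have "\<forall>(x, y) \<in> ord. x \<in> Vc \<longrightarrow> y \<in> Vc \<longrightarrow> s x < s y"
      using fm(4) f(2) VcVp by auto
    ultimately show "s \<in> Mc" by (simp add: Mc_def matches_def)
  qed
  have fK: "finite K" using K_eq fM by simp
  have cardK: "card K \<le> card Mc" using KMc fMc card_mono by blast
  have fMG: "finite (MG s)" for s using fM by (simp add: MGdef)
  have sumMG: "(\<Sum>s\<in>K. card (MG s)) = card M"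
  proof -
    have "M = (\<Union>s\<in>K. MG s)" using K_eq by (auto simp: MGdef)
    moreover have "card (\<Union>s\<in>K. MG s) = (\<Sum>s\<in>K. card (MG s))"
      by (rule card_UN_disjoint) (auto simp: fK fM MGdef)
    ultimately show ?thesis by simp
  qed
  have cs_le: "comp_size Vp Ep ord Vd Ed Vc s \<le> card Vc + card (Vp - Vc) * card (MG s)" for s
  proof -
    have "(\<Sum>v \<in> Vp - Vc. card ((\<lambda>f. f v) ` MG s)) \<le> (\<Sum>v \<in> Vp - Vc. card (MG s))"
      by (rule sum_mono) (rule card_image_le[OF fMG])
    then show ?thesis by (simp add: comp_size_def MG_def)
  qed
  have Sc_le: "S_comp Vp Ep ord Vd Ed Vc \<le> card K * card Vc + card (Vp - Vc) * card M"
  proof -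
    have "S_comp Vp Ep ord Vd Ed Vc \<le> (\<Sum>s\<in>K. card Vc + card (Vp - Vc) * card (MG s))"
      unfolding S_comp_def K_def[symmetric] by (rule sum_mono) (rule cs_le)
    also have "\<dots> = card K * card Vc + card (Vp - Vc) * card M"
      by (simp add: sum.distrib sum_distrib_left[symmetric] sumMG)
    finally show ?thesis .
  qed
  have cVp: "card (Vp - Vc) = card Vp - card Vc" using card_Diff_subset[OF fVc VcVp] .
  have cle: "card Vc \<le> card Vp" using card_mono[OF fVp VcVp] .
  have MK: "M \<noteq> {}" using assms(5) M_def by simp
  have Kne: "K \<noteq> {}" using K_eq MK by simp
  show ?thesis
  proof (cases "Vp = {}")
    case True
    then show ?thesis by (simp add: compression_ratio_def S_plain_def)
  next
    case False
    have cM: "card M > 0" using fM MK card_gt_0_iff by blast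
    have cVp0: "card Vp > 0" using fVp False card_gt_0_iff by blast
    have Scpos: "S_comp Vp Ep ord Vd Ed Vc > 0"
    proof -
      obtain s where s: "s \<in> K" using Kne by blast
      have "MG s \<noteq> {}" using s by (auto simp: K_def skeletons_def MG_def)
      have "comp_size Vp Ep ord Vd Ed Vc s > 0"
      proof (cases "Vc = {}")
        case True
        then obtain v where v: "v \<in> Vp - Vc" using False by blast
        have "finite (Vp - Vc)" using fVp by simp
        moreover have "card ((\<lambda>f. f v) ` MG s) > 0"
          using \<open>MG s \<noteq> {}\<close> fMG card_gt_0_iff by blast
        ultimately have "(\<Sum>v \<in> Vp - Vc. card ((\<lambda>f. f v) ` MG s)) > 0"
          using v member_le_sum[of v "Vp - Vc" "\<lambda>v. card ((\<lambda>f. f v) ` MG s)"] by auto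
        then show ?thesis by (simp add: comp_size_def MG_def)
      next
        case False
        then have "card Vc > 0" using fVc card_gt_0_iff by blast
        then show ?thesis by (simp add: comp_size_def)
      qed
      then show ?thesis unfolding S_comp_def K_def[symmetric]
        using fK s member_le_sum[of s K "comp_size Vp Ep ord Vd Ed Vc"] by auto
    qed
    let ?A = "real (card Vp * card M)"
    let ?D = "?A + real (card Vc) * (real (card Mc) - real (card M))"
    have "real (S_comp Vp Ep ord Vd Ed Vc) \<le> real (card K * card Vc + card (Vp - Vc) * card M)"
      using Sc_le by linarith
    also have "\<dots> \<le> ?D"
    proof -
      have "real (card K) * real (card Vc) \<le> real (card Mc) * real (card Vc)"
        using cardK by (simp add: mult_right_mono)
      moreover have "card (Vp - Vc) * card M + card Vc * card M = card Vp * card M"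
        using cle cVp by (metis add_mult_distrib le_add_diff_inverse2)
      then have "real (card (Vp - Vc) * card M) = real (card Vp) * real (card M) - real (card Vc) * real (card M)"
        by (metis add_diff_cancel_right' of_nat_add of_nat_mult)
      ultimately show ?thesis by (simp add: algebra_simps)
    qed
    finally have SD: "real (S_comp Vp Ep ord Vd Ed Vc) \<le> ?D" .
    have Apos: "?A > 0" using cM cVp0 by simp
    have "?A / ?D \<le> ?A / real (S_comp Vp Ep ord Vd Ed Vc)"
      by (rule divide_left_mono) (use SD Apos Scpos in auto)
    then show ?thesis
      by (simp add: compression_ratio_def S_plain_def M_def Mc_def)
  qed
qed

end
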